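(* Let $\boldsymbol\lambda,\boldsymbol\mu\in\Pi^l_m$ and $\lambda,\mu\in\Pi$ with $\boldsymbol\lambda\leftrightarrow\lambda$, $\boldsymbol\mu\leftrightarrow\mu$, and assume $|\lambda|=|\mu|=r$. Then $(\boldsymbol\lambda,\boldsymbol\mu)$ satisfies (J1) or (J2) if and only if $\#(B(\lambda)\cap B(\mu))=r-2$.
   Context: Fix $n,l,m\ge1$ and $\mathbf s_l=(s_1,\dots,s_l)\in\mathbb Z^l$, $s=s_1+\dots+s_l$. Partitions are identified with Young diagrams; $\Pi$ is the set of partitions, $\Pi^l_m$ the set of $l$-tuples $\boldsymbol\lambda=(\lambda^{(1)},\dots,\lambda^{(l)})$ of partitions of total size $m$. A ribbon is a nonempty connected skew diagram containing no $2\times2$ square. For $\lambda$ with $|\lambda|=r$, $B(\lambda)=\{\lambda_i+s+1-i:1\le i\le r\}$. Each $k\in\mathbb Z$ is uniquely $k=c(k)+n(d(k)-1)+nl\,m(k)$ with $c(k)\in\{1,\dots,n\}$, $d(k)\in\{1,\dots,l\}$; $\phi(k)=c(k)+n\,m(k)$. $\boldsymbol\lambda\leftrightarrow\lambda$ iff $\{(\lambda^{(b)}_i+s_b+1-i,b):i\ge1,b\}=\{(\phi(k),d(k)):k\in\{\lambda_i+s+1-i:i\ge1\}\}$. Conditions: (J1) $\boldsymbol\lambda\neq\boldsymbol\mu$ and there are $d\ne d'$ with $\mu^{(d)}\subset\lambda^{(d)}$, $\lambda^{(d')}\subset\mu^{(d')}$, $\lambda^{(b)}=\mu^{(b)}$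 for $b\notin\{d,d'\}$, and $\lambda^{(d)}/\mu^{(d)}$ and $\mu^{(d')}/\lambda^{(d')}$ are ribbons of the same length. (J2) $\boldsymbol\lambda\ne\boldsymbol\mu$ and there is $d$ with $\lambda^{(b)}=\mu^{(b)}$ for $b\ne d$, and $\lambda^{(d)}/(\lambda^{(d)}\cap\mu^{(d)})$, $\mu^{(d)}/(\lambda^{(d)}\cap\mu^{(d)})$ are ribbons of the same length. *)

theory Defs
  imports Main
begin

text \<open>Partitions are represented 1-based as functions nat => nat:
  lam i is the i-th part (i >= 1), lam 0 = 0 by convention,
  weakly decreasing, finitely many nonzero parts.\<close>

definition is_partition :: "(nat \<Rightarrow> nat) \<Rightarrow> bool" where
  "is_partition lam \<longleftrightarrow> lam 0 = 0 \<and> (\<forall>i\<ge>1. lam (Suc i) \<le> lam i)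
     \<and> finite {i. lam i \<noteq> 0}"

definition psize :: "(nat \<Rightarrow> nat) \<Rightarrow> nat" where
  "psize lam = (\<Sum>i\<in>{i. lam i \<noteq> 0}. lam i)"

definition diagram :: "(nat \<Rightarrow> nat) \<Rightarrow> (nat \<times> nat) set" where
  "diagram lam = {(i, j). 1 \<le> i \<and> 1 \<le> j \<and> j \<le> lam i}"

definition cell_adj :: "nat \<times> nat \<Rightarrow> nat \<times> nat \<Rightarrow> bool" where
  "cell_adj x y \<longleftrightarrow>
     (fst x = fst y \<and> (snd y = Suc (snd x) \<or> snd x = Suc (snd y))) \<or>
     (snd x = snd y \<and> (fst y = Suc (fst x) \<or> fst x = Suc (fst y)))"

definition cells_connected :: "(nat \<times> nat) set \<Rightarrow> bool" where
  "cells_connected S \<longleftrightarrow>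
     (\<forall>x\<in>S. \<forall>y\<in>S. (\<lambda>u v. u \<in> S \<and> v \<in> S \<and> cell_adj u v)\<^sup>*\<^sup>* x y)"

definition no_2x2 :: "(nat \<times> nat) set \<Rightarrow> bool" where
  "no_2x2 S \<longleftrightarrow> \<not> (\<exists>i j. (i, j) \<in> S \<and> (Suc i, j) \<in> S \<and> (i, Suc j) \<in> S
                           \<and> (Suc i, Suc j) \<in> S)"

text \<open>A ribbon: nonempty connected skew diagram with no 2x2 square.
  It is only applied to skew diagrams (differences of Young diagrams).\<close>
definition is_ribbon :: "(nat \<times> nat) set \<Rightarrow> bool" where
  "is_ribbon S \<longleftrightarrow> finite S \<and> S \<noteq> {} \<and> cells_connected S \<and> no_2x2 S"

definition skew :: "(nat \<Rightarrow> nat) \<Rightarrow> (nat \<Rightarrow> nat) \<Rightarrow> (nat \<times> nat) set" where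
  "skew lam mu = diagram lam - diagram mu"

definition pinter :: "(nat \<Rightarrow> nat) \<Rightarrow> (nat \<Rightarrow> nat) \<Rightarrow> (nat \<Rightarrow> nat)" where
  "pinter lam mu = (\<lambda>i. min (lam i) (mu i))"

definition psubset_eq :: "(nat \<Rightarrow> nat) \<Rightarrow> (nat \<Rightarrow> nat) \<Rightarrow> bool" where
  "psubset_eq mu lam \<longleftrightarrow> diagram mu \<subseteq> diagram lam"

definition multipartitions :: "nat \<Rightarrow> nat \<Rightarrow> (nat \<Rightarrow> nat \<Rightarrow> nat) set" where
  "multipartitions l m = {L. (\<forall>b\<in>{1..l}. is_partition (L b)) \<and>
                            (\<Sum>b=1..l. psize (L b)) = m}"

definition mp_eq :: "nat \<Rightarrow> (nat \<Rightarrow> nat \<Rightarrow> nat) \<Rightarrow> (nat \<Rightarrow> nat \<Rightarrow> nat) \<Rightarrow> bool" where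
  "mp_eq l L M \<longleftrightarrow> (\<forall>b\<in>{1..l}. L b = M b)"

definition J1 :: "nat \<Rightarrow> (nat \<Rightarrow> nat \<Rightarrow> nat) \<Rightarrow> (nat \<Rightarrow> nat \<Rightarrow> nat) \<Rightarrow> bool" where
  "J1 l L M \<longleftrightarrow> \<not> mp_eq l L M \<and>
     (\<exists>d\<in>{1..l}. \<exists>d'\<in>{1..l}. d \<noteq> d' \<and>
        psubset_eq (M d) (L d) \<and> psubset_eq (L d') (M d') \<and>
        (\<forall>b\<in>{1..l}. b \<notin> {d, d'} \<longrightarrow> L b = M b) \<and>
        is_ribbon (skew (L d) (M d)) \<and> is_ribbon (skew (M d') (L d')) \<and>
        card (skew (L d) (M d)) = card (skew (M d') (L d')))"

definition J2 :: "nat \<Rightarrow> (nat \<Rightarrow> nat \<Rightarrow> nat) \<Rightarrow> (nat \<Rightarrow> nat \<Rightarrow> nat) \<Rightarrow> bool" where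
  "J2 l L M \<longleftrightarrow> \<not> mp_eq l L M \<and>
     (\<exists>d\<in>{1..l}.
        (\<forall>b\<in>{1..l}. b \<noteq> d \<longrightarrow> L b = M b) \<and>
        is_ribbon (skew (L d) (pinter (L d) (M d))) \<and>
        is_ribbon (skew (M d) (pinter (L d) (M d))) \<and>
        card (skew (L d) (pinter (L d) (M d))) = card (skew (M d) (pinter (L d) (M d))))"

text \<open>k = c(k) + n(d(k)-1) + n l m(k), c in 1..n, d in 1..l.\<close>
definition cdec :: "nat \<Rightarrow> int \<Rightarrow> int" where
  "cdec n k = (k - 1) mod int n + 1"

definition ddec :: "nat \<Rightarrow> nat \<Rightarrow> int \<Rightarrow> nat" where
  "ddec n l k = nat (((k - 1) div int n) mod int l) + 1"

definition mdec :: "nat \<Rightarrow> nat \<Rightarrow> int \<Rightarrow> int" where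
  "mdec n l k = (k - 1) div (int n * int l)"

definition phi :: "nat \<Rightarrow> nat \<Rightarrow> int \<Rightarrow> int" where
  "phi n l k = cdec n k + int n * mdec n l k"

definition beta_set :: "(nat \<Rightarrow> nat) \<Rightarrow> int \<Rightarrow> int set" where
  "beta_set lam s = {int (lam i) + s + 1 - int i | i. i \<ge> 1}"

text \<open>The correspondence boldlambda <-> lambda (with charge s_l, s = sum).\<close>
definition corresp :: "nat \<Rightarrow> nat \<Rightarrow> (nat \<Rightarrow> int) \<Rightarrow> (nat \<Rightarrow> nat \<Rightarrow> nat) \<Rightarrow> (nat \<Rightarrow> nat) \<Rightarrow> bool" where
  "corresp n l sl L lam \<longleftrightarrow>
     {(int (L b i) + sl b + 1 - int i, b) | i b. i \<ge> 1 \<and> b \<in> {1..l}} =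
     {(phi n l k, ddec n l k) | k. k \<in> beta_set lam (\<Sum>b=1..l. sl b)}"

definition Bset :: "(nat \<Rightarrow> nat) \<Rightarrow> int \<Rightarrow> nat \<Rightarrow> int set" where
  "Bset lam s r = {int (lam i) + s + 1 - int i | i. 1 \<le> i \<and> i \<le> r}"

end

theory Submission
  imports Defs
begin

definition B0 :: "(nat \<Rightarrow> nat) \<Rightarrow> int set" where
  "B0 lam = {int (lam i) - int i | i. 1 \<le> i}"
definition T0 :: "(nat \<Rightarrow> nat) \<Rightarrow> nat \<Rightarrow> int set" where
  "T0 lam R = {int (lam i) - int i | i. 1 \<le> i \<and> i \<le> R}"
definition cnt :: "(nat \<Rightarrow> nat) \<Rightarrow> int \<Rightarrow> nat" where
  "cnt lam t = card {i. 1 \<le> i \<and> t \<le> int (lam i) - int i}"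

lemma part_mono:
  assumes "is_partition lam" "1 \<le> i" "i \<le> j" shows "lam j \<le> lam i"
  using assms(3)
proof (induction j rule: dec_induct)
  case base then show ?case by simp
next
  case (step k)
  then have "lam (Suc k) \<le> lam k" using assms(1,2) unfolding is_partition_def by auto
  with step show ?case by simp
qed

lemma part_bound:
  assumes "is_partition lam" shows "\<exists>R. \<forall>i>R. lam i = 0"
proof -
  have "finite {i. lam i \<noteq> 0}" using assms unfolding is_partition_def by auto
  then obtain R where "\<forall>i\<in>{i. lam i \<noteq> 0}. i \<le> R"
    using finite_nat_set_iff_bounded_le by blast
  then show ?thesis by (metis mem_Collect_eq not_le)
qed

lemma part_strict:
  assumes "is_partition lam" "1 \<le> i" "i < j"
  shows "int (lam j) - int j < int (lam i) - int i"
  using part_mono[OF assms(1,2), of j] assms(3) by linarith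

lemma inj_g: assumes "is_partition lam" shows "inj_on (\<lambda>i. int (lam i) - int i) {i. 1 \<le> i}"
proof (rule inj_onI)
  fix x y assume "x \<in> {i. 1 \<le> i}" "y \<in> {i. 1 \<le> i}" "int (lam x) - int x = int (lam y) - int y"
  then show "x = y" using part_strict[OF assms, of x y] part_strict[OF assms, of y x]
    by (metis less_irrefl linorder_neqE_nat mem_Collect_eq)
qed

lemma cntset_finite:
  assumes "is_partition lam" shows "finite {i. 1 \<le> i \<and> t \<le> int (lam i) - int i}"
proof -
  obtain R where R: "\<forall>i>R. lam i = 0" using part_bound[OF assms] by blast
  have "{i. 1 \<le> i \<and> t \<le> int (lam i) - int i} \<subseteq> {..max R (nat (-t))}"
  proof
    fix i assume i: "i \<in> {i. 1 \<le> i \<and> t \<le> int (lam i) - int i}"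
    show "i \<in> {..max R (nat (-t))}"
    proof (cases "i > R")
      case True then have "lam i = 0" using R by auto
      then show ?thesis using i by auto
    qed auto
  qed
  then show ?thesis using finite_subset by blast
qed

lemma initial_seg:
  fixes S :: "nat set"
  assumes "finite S" "\<forall>i\<in>S. 1 \<le> i" "\<And>i j. i \<in> S \<Longrightarrow> 1 \<le> j \<Longrightarrow> j \<le> i \<Longrightarrow> j \<in> S"
  shows "S = {1..card S}"
proof (cases "S = {}")
  case True then show ?thesis by simp
next
  case False
  define k where "k = Max S"
  have kS: "k \<in> S" using False assms(1) k_def by simp
  have "S = {1..k}"
  proof
    show "S \<subseteq> {1..k}" using assms(1,2) k_def by auto
    show "{1..k} \<subseteq> S" using assms(3)[OF kS] by auto
  qed
  then show ?thesis by simp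
qed

lemma K1:
  assumes "is_partition lam" "1 \<le> i"
  shows "i \<le> cnt lam t \<longleftrightarrow> t \<le> int (lam i) - int i"
proof -
  define S where "S = {i. 1 \<le> i \<and> t \<le> int (lam i) - int i}"
  have "S = {1..card S}"
  proof (rule initial_seg)
    show "finite S" using cntset_finite[OF assms(1)] S_def by simp
    show "\<forall>i\<in>S. 1 \<le> i" using S_def by simp
    fix i j assume "i \<in> S" "1 \<le> j" "j \<le> i"
    then show "j \<in> S" using part_mono[OF assms(1), of j i] S_def by auto
  qed
  then have "i \<le> card S \<longleftrightarrow> i \<in> S" using assms(2) by (metis atLeastAtMost_iff)
  then show ?thesis using S_def cnt_def assms(2) by simp
qed


lemma K3set:
  assumes "is_partition lam"
  shows "{x \<in> B0 lam. t \<le> x} = (\<lambda>i. int (lam i) - int i) ` {i. 1 \<le> i \<and> t \<le> int (lam i) - int i}"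
  unfolding B0_def by auto

lemma K3:
  assumes "is_partition lam"
  shows "cnt lam t = card {x \<in> B0 lam. t \<le> x}" and "finite {x \<in> B0 lam. t \<le> x}"
proof -
  have inj: "inj_on (\<lambda>i. int (lam i) - int i) {i. 1 \<le> i \<and> t \<le> int (lam i) - int i}"
    using inj_g[OF assms] by (rule inj_on_subset) auto
  show "cnt lam t = card {x \<in> B0 lam. t \<le> x}"
    unfolding K3set[OF assms] cnt_def using card_image[OF inj] by simp
  show "finite {x \<in> B0 lam. t \<le> x}"
    unfolding K3set[OF assms] using cntset_finite[OF assms] by simp
qed

lemma K2:
  assumes "is_partition lam"
  shows "cnt lam x = cnt lam (x+1) + (if x \<in> B0 lam then 1 else 0)"
proof -
  have e: "{y \<in> B0 lam. x \<le> y} = {y \<in> B0 lam. x+1 \<le> y} \<union> (if x \<in> B0 lam then {x} else {})"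
    by (auto, (metis order_le_less zless_imp_add1_zle)+)
  have f: "finite {y \<in> B0 lam. x+1 \<le> y}" using K3(2)[OF assms] by blast
  show ?thesis unfolding K3(1)[OF assms] e using f by auto
qed

lemma cnt_anti:
  assumes "is_partition lam" "t \<le> t'" shows "cnt lam t' \<le> cnt lam t"
  unfolding cnt_def using assms(2) by (intro card_mono cntset_finite[OF assms(1)]) auto

lemma cnt_step: assumes "is_partition lam" shows "cnt lam t \<le> cnt lam (t+1) + 1"
  using K2[OF assms, of t] by (auto split: if_splits)

lemma cnt_lower:
  assumes "is_partition lam" shows "- t \<le> int (cnt lam t)"
proof (cases "-t \<ge> 1")
  case True
  have "nat (-t) \<le> cnt lam t" using K1[OF assms, of "nat (-t)" t] True by simp
  then show ?thesis using True by linarith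
qed auto

lemma CELL:
  assumes "is_partition lam"
  shows "(i, j) \<in> diagram lam \<longleftrightarrow> 1 \<le> i \<and> 1 \<le> j \<and> i \<le> cnt lam (int j - int i)"
proof -
  have "1 \<le> i \<Longrightarrow> (i \<le> cnt lam (int j - int i)) = (int j - int i \<le> int (lam i) - int i)"
    using K1[OF assms] by blast
  then show ?thesis unfolding diagram_def by auto
qed

lemma B0_from_cnt:
  assumes "is_partition lam" shows "B0 lam = {x. cnt lam x = cnt lam (x+1) + 1}"
proof
  show "B0 lam \<subseteq> {x. cnt lam x = cnt lam (x+1) + 1}"
  proof
    fix x assume "x \<in> B0 lam"
    then show "x \<in> {x. cnt lam x = cnt lam (x+1) + 1}" using K2[OF assms, of x] by simp
  qed
  show "{x. cnt lam x = cnt lam (x+1) + 1} \<subseteq> B0 lam"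
  proof
    fix x assume "x \<in> {x. cnt lam x = cnt lam (x+1) + 1}"
    then show "x \<in> B0 lam" using K2[OF assms, of x] by (auto split: if_splits)
  qed
qed

lemma cnt_det:
  assumes "is_partition lam" "is_partition mu" "\<And>t. cnt lam t = cnt mu t"
  shows "lam = mu"
proof
  fix i show "lam i = mu i"
  proof (cases "i = 0")
    case True then show ?thesis using assms(1,2) unfolding is_partition_def by simp
  next
    case False then have i: "1 \<le> i" by simp
    have a: "int (lam i) - int i \<le> int (mu i) - int i"
      using K1[OF assms(1) i, of "int (lam i) - int i"] K1[OF assms(2) i, of "int (lam i) - int i"] assms(3) by simp
    have b: "int (mu i) - int i \<le> int (lam i) - int i"
      using K1[OF assms(1) i, of "int (mu i) - int i"] K1[OF assms(2) i, of "int (mu i) - int i"] assms(3) by simp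
    from a b show ?thesis by simp
  qed
qed

lemma B0_det:
  assumes "is_partition lam" "is_partition mu" "B0 lam = B0 mu" shows "lam = mu"
  using cnt_det[OF assms(1,2)] K3(1)[OF assms(1)] K3(1)[OF assms(2)] assms(3) by simp

lemma K4:
  assumes "is_partition nu" "is_partition lam"
  shows "psubset_eq nu lam \<longleftrightarrow> (\<forall>t. cnt nu t \<le> cnt lam t)"
proof
  assume "\<forall>t. cnt nu t \<le> cnt lam t"
  then show "psubset_eq nu lam" unfolding psubset_eq_def
    using CELL[OF assms(1)] CELL[OF assms(2)] by (auto intro: order_trans) (meson order_trans)
next
  assume "psubset_eq nu lam"
  then have le: "nu i \<le> lam i" if "1 \<le> i" for i
  proof (cases "nu i = 0")
    case False
    then have "(i, nu i) \<in> diagram nu" unfolding diagram_def using that by auto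
    then have "(i, nu i) \<in> diagram lam" using \<open>psubset_eq nu lam\<close> unfolding psubset_eq_def by blast
    then show ?thesis unfolding diagram_def by auto
  qed simp
  show "\<forall>t. cnt nu t \<le> cnt lam t"
  proof
    fix t show "cnt nu t \<le> cnt lam t"
    proof (cases "cnt nu t = 0")
      case False
      then have i: "1 \<le> cnt nu t" by simp
      have "t \<le> int (nu (cnt nu t)) - int (cnt nu t)" using K1[OF assms(1) i, of t] by simp
      then have "t \<le> int (lam (cnt nu t)) - int (cnt nu t)" using le[OF i] by linarith
      then show ?thesis using K1[OF assms(2) i] by simp
    qed (simp)
  qed
qed

lemma cnt_eqI:
  assumes "is_partition lam" "\<And>i. 1 \<le> i \<Longrightarrow> (i \<le> A \<longleftrightarrow> t \<le> int (lam i) - int i)"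
  shows "cnt lam t = A"
proof (rule ccontr)
  assume ne: "cnt lam t \<noteq> A"
  show False
  proof (cases "cnt lam t < A")
    case True
    have h: "Suc (cnt lam t) \<le> A" using True by simp
    have "t \<le> int (lam (Suc (cnt lam t))) - int (Suc (cnt lam t))"
      using assms(2)[of "Suc (cnt lam t)"] h by (simp del: of_nat_Suc)
    then have "Suc (cnt lam t) \<le> cnt lam t" using K1[OF assms(1), of "Suc (cnt lam t)" t] by (simp del: of_nat_Suc)
    then show False by simp
  next
    case False
    then have h: "Suc A \<le> cnt lam t" using ne by simp
    have "t \<le> int (lam (Suc A)) - int (Suc A)"
      using K1[OF assms(1), of "Suc A" t] h by (simp del: of_nat_Suc)
    then have "Suc A \<le> A" using assms(2)[of "Suc A"] by (simp del: of_nat_Suc)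
    then show False by simp
  qed
qed

lemma pinter_part:
  assumes "is_partition lam" "is_partition mu" shows "is_partition (pinter lam mu)"
proof -
  have "{i. min (lam i) (mu i) \<noteq> 0} \<subseteq> {i. lam i \<noteq> 0}" by auto
  then have "finite {i. min (lam i) (mu i) \<noteq> 0}"
    using assms(1) unfolding is_partition_def using finite_subset by blast
  moreover have "\<forall>i\<ge>1. min (lam (Suc i)) (mu (Suc i)) \<le> min (lam i) (mu i)"
  proof (intro allI impI)
    fix i :: nat assume "1 \<le> i"
    then have "lam (Suc i) \<le> lam i" "mu (Suc i) \<le> mu i" using assms unfolding is_partition_def by auto
    then show "min (lam (Suc i)) (mu (Suc i)) \<le> min (lam i) (mu i)" by (rule min.mono)
  qed
  ultimately show ?thesis using assms unfolding is_partition_def pinter_def by simp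
qed

lemma cnt_pinter:
  assumes "is_partition lam" "is_partition mu"
  shows "cnt (pinter lam mu) t = min (cnt lam t) (cnt mu t)"
proof (rule cnt_eqI[OF pinter_part[OF assms]])
  fix i :: nat assume i: "1 \<le> i"
  show "i \<le> min (cnt lam t) (cnt mu t) \<longleftrightarrow> t \<le> int (pinter lam mu i) - int i"
    using K1[OF assms(1) i, of t] K1[OF assms(2) i, of t] unfolding pinter_def by auto
qed

lemma diagram_Sigma:
  assumes "is_partition lam"
  shows "diagram lam = (SIGMA i:{i. lam i \<noteq> 0}. {1..lam i})"
proof -
  have "lam 0 = 0" using assms unfolding is_partition_def by simp
  show ?thesis
  proof (rule set_eqI)
    fix x :: "nat \<times> nat"
    obtain i j where x: "x = (i,j)" by (cases x)
    show "x \<in> diagram lam \<longleftrightarrow> x \<in> (SIGMA i:{i. lam i \<noteq> 0}. {1..lam i})"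
      unfolding x diagram_def using \<open>lam 0 = 0\<close> by (cases "i = 0") auto
  qed
qed

lemma card_diagram:
  assumes "is_partition lam" shows "card (diagram lam) = psize lam" and "finite (diagram lam)"
proof -
  have f: "finite {i. lam i \<noteq> 0}" using assms unfolding is_partition_def by simp
  show "card (diagram lam) = psize lam" unfolding diagram_Sigma[OF assms] psize_def
    using card_SigmaI[OF f, of "\<lambda>i. {1..lam i}"] by simp
  show "finite (diagram lam)" unfolding diagram_Sigma[OF assms] using f by auto
qed

lemma card_skew:
  assumes "is_partition nu" "is_partition lam" "psubset_eq nu lam"
  shows "card (skew lam nu) = psize lam - psize nu"
proof -
  have "finite (diagram nu)" using card_diagram(2)[OF assms(1)] .
  then have "card (diagram lam - diagram nu) = card (diagram lam) - card (diagram nu)"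
    using assms(3) unfolding psubset_eq_def by (rule card_Diff_subset)
  then show ?thesis unfolding skew_def using card_diagram(1) assms(1,2) by simp
qed


definition cont :: "nat \<times> nat \<Rightarrow> int" where "cont x = int (snd x) - int (fst x)"

lemma SKEW:
  assumes "is_partition nu" "is_partition lam"
  shows "(i, j) \<in> skew lam nu \<longleftrightarrow> 1 \<le> i \<and> 1 \<le> j \<and> cnt nu (int j - int i) < i \<and> i \<le> cnt lam (int j - int i)"
  unfolding skew_def using CELL[OF assms(1)] CELL[OF assms(2)] by auto

lemma sym_rtranclp:
  assumes "\<And>u v. R u v \<Longrightarrow> R v u" "R\<^sup>*\<^sup>* x y" shows "R\<^sup>*\<^sup>* y x"
  using assms(2)
proof (induction rule: rtranclp_induct)
  case base then show ?case by simp
next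
  case (step y z)
  then show ?case using assms(1) converse_rtranclp_into_rtranclp by metis
qed

definition cellc :: "(nat \<Rightarrow> nat) \<Rightarrow> int \<Rightarrow> nat \<times> nat" where
  "cellc lam t = (cnt lam t, nat (int (cnt lam t) + t))"

lemma cellc_in:
  assumes "is_partition nu" "is_partition lam" "cnt nu t < cnt lam t"
  shows "cellc lam t \<in> skew lam nu" and "cont (cellc lam t) = t"
proof -
  have l: "- t \<le> int (cnt nu t)" using cnt_lower[OF assms(1)] .
  then have p: "1 \<le> int (cnt lam t) + t" using assms(3) by linarith
  have c: "int (nat (int (cnt lam t) + t)) - int (cnt lam t) = t" using p by simp
  show "cellc lam t \<in> skew lam nu" unfolding cellc_def SKEW[OF assms(1,2)] c using p assms(3) by auto
  show "cont (cellc lam t) = t" unfolding cont_def cellc_def using c by simp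
qed

lemma skew_cont:
  assumes "is_partition nu" "is_partition lam" "x \<in> skew lam nu"
  shows "cnt nu (cont x) < fst x" "fst x \<le> cnt lam (cont x)"
  using assms(3) SKEW[OF assms(1,2), of "fst x" "snd x"] unfolding cont_def by auto

lemma ribbon_if:
  assumes nu: "is_partition nu" and lam: "is_partition lam" and pa: "p < a"
    and D: "\<And>t. cnt lam t = cnt nu t + (if p < t \<and> t \<le> a then 1 else 0)"
  shows "is_ribbon (skew lam nu)"
proof -
  have inS: "cellc lam t \<in> skew lam nu" if "p < t" "t \<le> a" for t
    using cellc_in(1)[OF nu lam] D[of t] that by simp
  have isc: "x = cellc lam (cont x) \<and> p < cont x \<and> cont x \<le> a" if "x \<in> skew lam nu" for x
  proof -
    have a1: "cnt nu (cont x) < fst x" "fst x \<le> cnt lam (cont x)" using skew_cont[OF nu lam that] by auto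
    then have r: "p < cont x \<and> cont x \<le> a" using D[of "cont x"] by (auto split: if_splits)
    then have f: "fst x = cnt lam (cont x)" using a1 D[of "cont x"] by auto
    have "snd x = nat (int (fst x) + cont x)" unfolding cont_def by simp
    then have "x = cellc lam (cont x)" unfolding cellc_def using f by (metis prod.collapse)
    then show ?thesis using r by simp
  qed
  define R where "R = (\<lambda>u v. u \<in> skew lam nu \<and> v \<in> skew lam nu \<and> cell_adj u v)"
  have Rsym: "R u v \<Longrightarrow> R v u" for u v unfolding R_def cell_adj_def by auto
  have adj: "R (cellc lam t) (cellc lam (t+1))" if "p < t" "t + 1 \<le> a" for t
  proof -
    have s1: "cnt lam (t+1) \<le> cnt lam t" using cnt_anti[OF lam] by simp
    have s2: "cnt lam t \<le> cnt lam (t+1) + 1" using cnt_step[OF lam] by simp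
    have pos: "1 \<le> int (cnt lam t) + t" "1 \<le> int (cnt lam (t+1)) + (t+1)"
      using cnt_lower[OF nu, of t] cnt_lower[OF nu, of "t+1"] D[of t] D[of "t+1"] that by auto
    have "cell_adj (cellc lam t) (cellc lam (t+1))"
    proof (cases "cnt lam (t+1) = cnt lam t")
      case True
      then show ?thesis unfolding cell_adj_def cellc_def using pos by auto
    next
      case False
      then have "cnt lam t = Suc (cnt lam (t+1))" using s1 s2 by simp
      then show ?thesis unfolding cell_adj_def cellc_def using pos by auto
    qed
    then show ?thesis unfolding R_def using inS that by auto
  qed
  have chain: "R\<^sup>*\<^sup>* (cellc lam (p+1)) (cellc lam (p + 1 + int k))" if "p + 1 + int k \<le> a" for k
    using that
  proof (induction k)
    case 0 then show ?case by simp
  next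
    case (Suc k)
    then have "R\<^sup>*\<^sup>* (cellc lam (p+1)) (cellc lam (p + 1 + int k))" by simp
    moreover have "R (cellc lam (p + 1 + int k)) (cellc lam (p + 1 + int k + 1))"
      using adj[of "p + 1 + int k"] Suc.prems by simp
    ultimately show ?case by (simp add: add.assoc)
  qed
  have toBase: "R\<^sup>*\<^sup>* (cellc lam (p+1)) (cellc lam t)" if "p < t" "t \<le> a" for t
    using chain[of "nat (t - p - 1)"] that by simp
  have conn: "cells_connected (skew lam nu)"
    unfolding cells_connected_def
  proof (intro ballI)
    fix x y assume x: "x \<in> skew lam nu" and y: "y \<in> skew lam nu"
    have "R\<^sup>*\<^sup>* x (cellc lam (p+1))"
      using isc[OF x] toBase[of "cont x"] sym_rtranclp[of R, OF Rsym] by metis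
    moreover have "R\<^sup>*\<^sup>* (cellc lam (p+1)) y" using isc[OF y] toBase[of "cont y"] by metis
    ultimately have "R\<^sup>*\<^sup>* x y" by (rule rtranclp_trans)
    then show "(\<lambda>u v. u \<in> skew lam nu \<and> v \<in> skew lam nu \<and> cell_adj u v)\<^sup>*\<^sup>* x y"
      unfolding R_def .
  qed
  have n2: "no_2x2 (skew lam nu)"
    unfolding no_2x2_def
  proof
    assume "\<exists>i j. (i, j) \<in> skew lam nu \<and> (Suc i, j) \<in> skew lam nu \<and> (i, Suc j) \<in> skew lam nu \<and> (Suc i, Suc j) \<in> skew lam nu"
    then obtain i j where c1: "(i, j) \<in> skew lam nu" and c2: "(Suc i, Suc j) \<in> skew lam nu" by blast
    have e: "int (Suc j) - int (Suc i) = int j - int i" by simp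
    show False using c1 c2 unfolding SKEW[OF nu lam] e using D[of "int j - int i"] by (auto split: if_splits)
  qed
  have fin: "finite (skew lam nu)" unfolding skew_def using card_diagram(2)[OF lam] by simp
  have ne: "skew lam nu \<noteq> {}" using inS[of a] pa by auto
  show ?thesis unfolding is_ribbon_def using fin ne conn n2 by simp
qed


lemma ribbon_only_if:
  assumes nu: "is_partition nu" and lam: "is_partition lam"
    and sub: "\<And>t. cnt nu t \<le> cnt lam t"
    and rib: "is_ribbon (skew lam nu)"
  shows "\<exists>p a. p < a \<and> (\<forall>t. cnt lam t = cnt nu t + (if p < t \<and> t \<le> a then 1 else 0))"
proof -
  have fin: "finite (skew lam nu)" and ne: "skew lam nu \<noteq> {}"
    and conn: "cells_connected (skew lam nu)" and n2: "no_2x2 (skew lam nu)"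
    using rib unfolding is_ribbon_def by auto
  have le1: "cnt lam t \<le> cnt nu t + 1" for t
  proof (rule ccontr)
    assume "\<not> cnt lam t \<le> cnt nu t + 1"
    then have big: "cnt nu t + 2 \<le> cnt lam t" by simp
    define i where "i = Suc (cnt nu t)"
    define j where "j = nat (int i + t)"
    have l: "- t \<le> int (cnt nu t)" using cnt_lower[OF nu] .
    then have jpos: "1 \<le> int i + t" unfolding i_def by simp
    have cj: "int j - int i = t" unfolding j_def using jpos by simp
    have cj1: "int j - int (Suc i) = t - 1" using cj by simp
    have cj2: "int (Suc j) - int i = t + 1" using cj by simp
    have cj3: "int (Suc j) - int (Suc i) = t" using cj by simp
    have a1: "cnt nu (t - 1) \<le> cnt nu t + 1" using cnt_step[OF nu, of "t-1"] by simp
    have a2: "cnt lam t \<le> cnt lam (t - 1)" using cnt_anti[OF lam, of "t-1" t] by simp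
    have a3: "cnt nu (t + 1) \<le> cnt nu t" using cnt_anti[OF nu, of t "t+1"] by simp
    have a4: "cnt lam t \<le> cnt lam (t + 1) + 1" using cnt_step[OF lam] .
    have jj: "1 \<le> j" using jpos unfolding j_def by simp
    have "(i, j) \<in> skew lam nu" "(Suc i, j) \<in> skew lam nu" "(i, Suc j) \<in> skew lam nu" "(Suc i, Suc j) \<in> skew lam nu"
      unfolding SKEW[OF nu lam] cj cj1 cj2 cj3 using big a1 a2 a3 a4 jj unfolding i_def by auto
    then show False using n2 unfolding no_2x2_def by blast
  qed
  define S where "S = {t. cnt nu t < cnt lam t}"
  have Simg: "S = cont ` skew lam nu"
  proof
    show "S \<subseteq> cont ` skew lam nu"
    proof
      fix t assume "t \<in> S"
      then have "cnt nu t < cnt lam t" unfolding S_def by simp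
      then show "t \<in> cont ` skew lam nu" using cellc_in[OF nu lam] by (metis imageI)
    qed
    show "cont ` skew lam nu \<subseteq> S"
      using skew_cont[OF nu lam] unfolding S_def by fastforce
  qed
  have Sfin: "finite S" using Simg fin by simp
  have Sne: "S \<noteq> {}" using Simg ne by simp
  define R where "R = (\<lambda>u v. u \<in> skew lam nu \<and> v \<in> skew lam nu \<and> cell_adj u v)"
  have nogap: "t2 \<in> S" if hyp: "t1 \<in> S" "t3 \<in> S" "t1 < t2" "t2 < t3" for t1 t2 t3
  proof (rule ccontr)
    assume t2: "t2 \<notin> S"
    obtain x where x: "x \<in> skew lam nu" "cont x = t1" using hyp(1) Simg by auto
    obtain y where y: "y \<in> skew lam nu" "cont y = t3" using hyp(2) Simg by auto
    have "R\<^sup>*\<^sup>* x y" using conn x y unfolding cells_connected_def R_def by blast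
    then have "cont y < t2"
    proof (induction rule: rtranclp_induct)
      case base then show ?case using x hyp by simp
    next
      case (step z w)
      then have w: "w \<in> skew lam nu" "cell_adj z w" unfolding R_def by auto
      have "cont w \<le> cont z + 1" using w(2) unfolding cell_adj_def cont_def by auto
      moreover have "cont w \<noteq> t2" using w(1) t2 Simg by auto
      ultimately show ?case using step.IH by linarith
    qed
    then show False using y hyp by simp
  qed
  define a where "a = Max S"
  define p where "p = Min S - 1"
  have mS: "Min S \<in> S" "Max S \<in> S" using Sfin Sne by auto
  have "Min S \<le> Max S" using Max_ge[OF Sfin mS(1)] .
  then have pa: "p < a" unfolding a_def p_def by simp
  have Siff: "t \<in> S \<longleftrightarrow> p < t \<and> t \<le> a" for t
  proof
    assume "t \<in> S" then have "Min S \<le> t" "t \<le> Max S" using Min_le[OF Sfin] Max_ge[OF Sfin] by auto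
    then show "p < t \<and> t \<le> a" unfolding a_def p_def by auto
  next
    assume h: "p < t \<and> t \<le> a"
    show "t \<in> S"
    proof (cases "t = Min S \<or> t = Max S")
      case True then show ?thesis using mS by auto
    next
      case False
      then have "Min S < t" "t < Max S" using h unfolding a_def p_def by auto
      then show ?thesis using nogap mS by blast
    qed
  qed
  have "\<forall>t. cnt lam t = cnt nu t + (if p < t \<and> t \<le> a then 1 else 0)"
  proof
    fix t show "cnt lam t = cnt nu t + (if p < t \<and> t \<le> a then 1 else 0)"
      using Siff[of t] le1[of t] sub[of t] unfolding S_def by auto
  qed
  then show ?thesis using pa by blast
qed

lemma R1:
  assumes nu: "is_partition nu" and lam: "is_partition lam"
    and D: "\<And>t. cnt lam t = cnt nu t + (if p < t \<and> t \<le> a then 1 else 0)"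
    and pa: "p < a"
  shows "B0 lam - B0 nu = {a}" "B0 nu - B0 lam = {p}"
proof -
  have key: "(if x \<in> B0 nu then 1 else 0) + (if p < x \<and> x \<le> a then 1 else 0)
           = (if p < x + 1 \<and> x + 1 \<le> a then 1 else 0) + (if x \<in> B0 lam then 1 else (0::nat))" for x
    using K2[OF nu, of x] K2[OF lam, of x] D[of x] D[of "x+1"] by simp
  have c: "(x \<in> B0 lam \<and> x \<notin> B0 nu \<longleftrightarrow> x = a) \<and> (x \<in> B0 nu \<and> x \<notin> B0 lam \<longleftrightarrow> x = p)" for x
    using key[of x] pa by (auto split: if_splits)
  show "B0 lam - B0 nu = {a}" using c by blast
  show "B0 nu - B0 lam = {p}" using c by blast
qed


lemma vanish:
  assumes "is_partition lam" "psize lam = r" shows "\<forall>i>r. lam i = 0"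
proof (intro allI impI, rule ccontr)
  fix i assume ir: "r < i" and nz: "lam i \<noteq> 0"
  have f: "finite {i. lam i \<noteq> 0}" using assms(1) unfolding is_partition_def by simp
  have ge: "1 \<le> lam j" if "j \<in> {1..i}" for j
    using part_mono[OF assms(1), of j i] that nz by auto
  have sub: "{1..i} \<subseteq> {i. lam i \<noteq> 0}" using ge by fastforce
  have "i = (\<Sum>j\<in>{1..i}. (1::nat))" by simp
  also have "\<dots> \<le> (\<Sum>j\<in>{1..i}. lam j)" using ge by (rule sum_mono)
  also have "\<dots> \<le> (\<Sum>j\<in>{i. lam i \<noteq> 0}. lam j)" by (rule sum_mono2[OF f sub]) simp
  also have "\<dots> = r" using assms(2) unfolding psize_def by simp
  finally show False using ir by simp
qed

lemma TB:
  assumes "is_partition lam" "\<forall>i>R. lam i = 0"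
  shows "B0 lam = T0 lam R \<union> {- int i | i. i > R}"
proof
  show "B0 lam \<subseteq> T0 lam R \<union> {- int i | i. i > R}"
  proof
    fix x assume "x \<in> B0 lam"
    then obtain i where i: "1 \<le> i" "x = int (lam i) - int i" unfolding B0_def by auto
    show "x \<in> T0 lam R \<union> {- int i | i. i > R}"
    proof (cases "i \<le> R")
      case True then show ?thesis using i unfolding T0_def by auto
    next
      case False then have "lam i = 0" using assms(2) by simp
      then show ?thesis using i False by auto
    qed
  qed
  show "T0 lam R \<union> {- int i | i. i > R} \<subseteq> B0 lam"
  proof
    fix x assume "x \<in> T0 lam R \<union> {- int i | i. i > R}"
    then show "x \<in> B0 lam"
    proof
      assume "x \<in> T0 lam R" then show ?thesis unfolding T0_def B0_def by auto
    next
      assume "x \<in> {- int i | i. i > R}"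
      then obtain i where i: "i > R" "x = - int i" by auto
      then have "lam i = 0" using assms(2) by simp
      then have "x = int (lam i) - int i \<and> 1 \<le> i" using i by simp
      then show ?thesis unfolding B0_def by blast
    qed
  qed
qed

lemma Tdisj:
  assumes "is_partition lam"
  shows "T0 lam R \<inter> {- int i | i. i > R} = {}"
  unfolding T0_def by auto

lemma Tcard:
  assumes "is_partition lam" shows "card (T0 lam R) = R" "finite (T0 lam R)"
proof -
  have "T0 lam R = (\<lambda>i. int (lam i) - int i) ` {1..R}" unfolding T0_def by auto
  moreover have "inj_on (\<lambda>i. int (lam i) - int i) {1..R}"
    using inj_g[OF assms] by (rule inj_on_subset) auto
  ultimately show "card (T0 lam R) = R" "finite (T0 lam R)" by (simp_all add: card_image)
qed

lemma diffT:
  assumes "is_partition lam" "is_partition mu" "\<forall>i>R. lam i = 0" "\<forall>i>R. mu i = 0"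
  shows "B0 lam - B0 mu = T0 lam R - T0 mu R"
  using TB[OF assms(1,3)] TB[OF assms(2,4)] Tdisj[OF assms(1), of R] by auto

lemma common_bound:
  assumes "is_partition lam" "is_partition mu"
  obtains R where "\<forall>i>R. lam i = 0" "\<forall>i>R. mu i = 0"
proof -
  obtain R1 where "\<forall>i>R1. lam i = 0" using part_bound[OF assms(1)] by blast
  moreover obtain R2 where "\<forall>i>R2. mu i = 0" using part_bound[OF assms(2)] by blast
  ultimately show ?thesis using that[of "max R1 R2"] by auto
qed

lemma card_inter:
  assumes "is_partition lam" "is_partition mu" "\<forall>i>R. lam i = 0" "\<forall>i>R. mu i = 0"
  shows "card (T0 lam R \<inter> T0 mu R) + card (B0 lam - B0 mu) = R"
    and "finite (B0 lam - B0 mu)"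
proof -
  have f: "finite (T0 lam R)" "finite (T0 mu R)" using Tcard assms by auto
  have "card (T0 lam R) = card (T0 lam R \<inter> T0 mu R) + card (T0 lam R - T0 mu R)"
    using f by (metis card_Int_Diff)
  then show "card (T0 lam R \<inter> T0 mu R) + card (B0 lam - B0 mu) = R"
    using Tcard(1)[OF assms(1)] diffT[OF assms] by simp
  show "finite (B0 lam - B0 mu)" using diffT[OF assms] f by simp
qed

lemma balance:
  assumes "is_partition lam" "is_partition mu"
  shows "card (B0 lam - B0 mu) = card (B0 mu - B0 lam)" "finite (B0 lam - B0 mu)"
proof -
  obtain R where R: "\<forall>i>R. lam i = 0" "\<forall>i>R. mu i = 0" using common_bound assms by blast
  have "card (T0 lam R \<inter> T0 mu R) + card (B0 lam - B0 mu) = R"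
    using card_inter[OF assms R] by simp
  moreover have "card (T0 mu R \<inter> T0 lam R) + card (B0 mu - B0 lam) = R"
    using card_inter[OF assms(2,1) R(2,1)] by simp
  ultimately show "card (B0 lam - B0 mu) = card (B0 mu - B0 lam)" by (simp add: Int_commute)
  show "finite (B0 lam - B0 mu)" using card_inter[OF assms R] by simp
qed

lemma Ediff:
  assumes "is_partition lam" "is_partition mu"
  shows "int (cnt lam t) - int (cnt mu t) =
         int (card {x \<in> B0 lam - B0 mu. t \<le> x}) - int (card {x \<in> B0 mu - B0 lam. t \<le> x})"
proof -
  have g: "cnt lam t = card {x \<in> B0 lam \<inter> B0 mu. t \<le> x} + card {x \<in> B0 lam - B0 mu. t \<le> x}"
    if "is_partition lam" for lam mu
  proof -
    have f: "finite {x \<in> B0 lam. t \<le> x}" using K3(2)[OF that] .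
    have e: "{x \<in> B0 lam. t \<le> x} = {x \<in> B0 lam \<inter> B0 mu. t \<le> x} \<union> {x \<in> B0 lam - B0 mu. t \<le> x}" by auto
    have "card {x \<in> B0 lam. t \<le> x} = card {x \<in> B0 lam \<inter> B0 mu. t \<le> x} + card {x \<in> B0 lam - B0 mu. t \<le> x}"
      unfolding e by (rule card_Un_disjoint) (use f e in auto)
    then show ?thesis using K3(1)[OF that] by simp
  qed
  show ?thesis using g[OF assms(1), of mu] g[OF assms(2), of lam] by (simp add: Int_commute)
qed

lemma cardf1: "card {x \<in> {a::int}. t \<le> x} = (if t \<le> a then 1 else 0)"
proof -
  have "{x \<in> {a::int}. t \<le> x} = (if t \<le> a then {a} else {})" by auto
  then show ?thesis by simp
qed

lemma cardf2: assumes "(a::int) \<noteq> b"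
  shows "card {x \<in> {a, b}. t \<le> x} = (if t \<le> a then 1 else 0) + (if t \<le> b then 1 else 0)"
proof -
  have "{x \<in> {a, b}. t \<le> x} = (if t \<le> a then {a} else {}) \<union> (if t \<le> b then {b} else {})" by auto
  then show ?thesis using assms by simp
qed


lemma S1:
  assumes lam: "is_partition lam" and mu: "is_partition mu"
    and d1: "B0 lam - B0 mu = {a}" and d2: "B0 mu - B0 lam = {c}"
  shows "(psubset_eq mu lam \<and> is_ribbon (skew lam mu)) \<or> (psubset_eq lam mu \<and> is_ribbon (skew mu lam))"
proof -
  have ac: "a \<noteq> c" using d1 d2 by blast
  have E: "int (cnt lam t) - int (cnt mu t) = (if t \<le> a then 1 else 0) - (if t \<le> c then 1 else 0)" for t
    using Ediff[OF lam mu, of t] unfolding d1 d2 cardf1 by simp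
  show ?thesis
  proof (cases "c < a")
    case True
    have D: "cnt lam t = cnt mu t + (if c < t \<and> t \<le> a then 1 else 0)" for t
      using E[of t] True by (auto split: if_splits)
    have "psubset_eq mu lam" using K4[OF mu lam] D by simp
    moreover have "is_ribbon (skew lam mu)" using ribbon_if[OF mu lam True D] .
    ultimately show ?thesis by simp
  next
    case False
    then have ca: "a < c" using ac by simp
    have D: "cnt mu t = cnt lam t + (if a < t \<and> t \<le> c then 1 else 0)" for t
      using E[of t] ca by (auto split: if_splits)
    have "psubset_eq lam mu" using K4[OF lam mu] D by simp
    moreover have "is_ribbon (skew mu lam)" using ribbon_if[OF lam mu ca D] .
    ultimately show ?thesis by simp
  qed
qed

lemma S2:
  assumes nu: "is_partition nu" and lam: "is_partition lam"
    and sub: "psubset_eq nu lam" and rib: "is_ribbon (skew lam nu)"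
  shows "card (B0 lam - B0 nu) = 1" "card (B0 nu - B0 lam) = 1"
proof -
  have "\<And>t. cnt nu t \<le> cnt lam t" using K4[OF nu lam] sub by simp
  then obtain p a where pa: "p < a" and D: "\<forall>t. cnt lam t = cnt nu t + (if p < t \<and> t \<le> a then 1 else 0)"
    using ribbon_only_if[OF nu lam _ rib] by blast
  show "card (B0 lam - B0 nu) = 1" "card (B0 nu - B0 lam) = 1"
    using R1[OF nu lam _ pa] D by simp_all
qed

lemma ribbon_pos:
  assumes nu: "is_partition nu" and lam: "is_partition lam"
    and sub: "psubset_eq nu lam" and rib: "is_ribbon (skew lam nu)"
  shows "psize nu < psize lam"
proof -
  have "card (skew lam nu) > 0" using rib unfolding is_ribbon_def by (simp add: card_gt_0_iff)
  then show ?thesis using card_skew[OF nu lam sub] by simp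
qed

lemma no_sub:
  assumes lam: "is_partition lam" and mu: "is_partition mu"
    and le: "\<And>t. cnt mu t \<le> cnt lam t" and eq: "psize lam = psize mu"
  shows "B0 lam = B0 mu"
proof -
  have s: "psubset_eq mu lam" using K4[OF mu lam] le by simp
  have "card (skew lam mu) = 0" using card_skew[OF mu lam s] eq by simp
  moreover have "finite (skew lam mu)" unfolding skew_def using card_diagram(2)[OF lam] by simp
  ultimately have "skew lam mu = {}" by simp
  then have "psubset_eq lam mu" unfolding skew_def psubset_eq_def by simp
  then have "\<And>t. cnt lam t \<le> cnt mu t" using K4[OF lam mu] by simp
  then have "\<And>t. cnt lam t = cnt mu t" using le by (meson antisym)
  then have "lam = mu" using cnt_det[OF lam mu] by blast
  then show ?thesis by simp
qed

lemma S3core: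
  assumes lam: "is_partition lam" and mu: "is_partition mu"
    and d1: "B0 lam - B0 mu = {a, b}" and d2: "B0 mu - B0 lam = {c, e}"
    and ab: "b < a" and ce: "e < c" and ca: "c < a" and sz: "psize lam = psize mu"
  shows "is_ribbon (skew lam (pinter lam mu)) \<and> is_ribbon (skew mu (pinter lam mu))
         \<and> card (skew lam (pinter lam mu)) = card (skew mu (pinter lam mu))"
proof -
  have bc: "b \<noteq> c" "b \<noteq> e" using d1 d2 by blast+
  have E: "int (cnt lam t) - int (cnt mu t) = (if t \<le> a then 1 else 0) + (if t \<le> b then 1 else 0)
            - (if t \<le> c then 1 else 0) - (if t \<le> e then 1 else 0)" for t
    using Ediff[OF lam mu, of t] unfolding d1 d2 cardf2[OF ab[THEN less_imp_neq, symmetric]]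
      cardf2[OF ce[THEN less_imp_neq, symmetric]] by simp
  have be: "e > b"
  proof (rule ccontr)
    assume "\<not> e > b"
    then have "e < b" using bc by simp
    then have "cnt mu t \<le> cnt lam t" for t using E[of t] ab ce ca by (auto split: if_splits)
    then have "B0 lam = B0 mu" using no_sub[OF lam mu _ sz] by blast
    then show False using d1 by blast
  qed
  define nu where "nu = pinter lam mu"
  have nu: "is_partition nu" using pinter_part[OF lam mu] nu_def by simp
  have cn: "cnt nu t = min (cnt lam t) (cnt mu t)" for t using cnt_pinter[OF lam mu] nu_def by simp
  have D1: "cnt lam t = cnt nu t + (if c < t \<and> t \<le> a then 1 else 0)" for t
    using E[of t] cn[of t] ab ce ca be by (auto split: if_splits)
  have D2: "cnt mu t = cnt nu t + (if b < t \<and> t \<le> e then 1 else 0)" for t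
    using E[of t] cn[of t] ab ce ca be by (auto split: if_splits)
  have r1: "is_ribbon (skew lam nu)" using ribbon_if[OF nu lam ca D1] .
  have r2: "is_ribbon (skew mu nu)" using ribbon_if[OF nu mu be D2] .
  have s1: "psubset_eq nu lam" using K4[OF nu lam] D1 by simp
  have s2: "psubset_eq nu mu" using K4[OF nu mu] D2 by simp
  have "card (skew lam nu) = card (skew mu nu)" using card_skew[OF nu lam s1] card_skew[OF nu mu s2] sz by simp
  then show ?thesis using r1 r2 nu_def by simp
qed


lemma pinter_comm: "pinter mu lam = pinter lam mu"
  unfolding pinter_def by (simp add: min.commute)

lemma S3:
  assumes lam: "is_partition lam" and mu: "is_partition mu"
    and c2: "card (B0 lam - B0 mu) = 2" and sz: "psize lam = psize mu"
  shows "is_ribbon (skew lam (pinter lam mu)) \<and> is_ribbon (skew mu (pinter lam mu))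
         \<and> card (skew lam (pinter lam mu)) = card (skew mu (pinter lam mu))"
proof -
  have c2': "card (B0 mu - B0 lam) = 2" using balance[OF lam mu] c2 by simp
  obtain a b where ab: "b < a" "B0 lam - B0 mu = {a, b}"
  proof -
    obtain x y where "x \<noteq> y" "B0 lam - B0 mu = {x, y}" using c2 card_2_iff by metis
    then show ?thesis using that[of x y] that[of y x] by (cases "x < y") (auto simp: insert_commute)
  qed
  obtain c e where ce: "e < c" "B0 mu - B0 lam = {c, e}"
  proof -
    obtain x y where "x \<noteq> y" "B0 mu - B0 lam = {x, y}" using c2' card_2_iff by metis
    then show ?thesis using that[of x y] that[of y x] by (cases "x < y") (auto simp: insert_commute)
  qed
  have "a \<noteq> c" using ab ce by blast
  then show ?thesis
  proof (cases "c < a")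
    case True
    show ?thesis using S3core[OF lam mu ab(2) ce(2) ab(1) ce(1) True sz] .
  next
    case False
    then have "a < c" using \<open>a \<noteq> c\<close> by simp
    then show ?thesis using S3core[OF mu lam ce(2) ab(2) ce(1) ab(1) _ sz[symmetric]] pinter_comm[of lam mu]
      by auto
  qed
qed

lemma S4:
  assumes lam: "is_partition lam" and mu: "is_partition mu"
    and r1: "is_ribbon (skew lam (pinter lam mu))" and r2: "is_ribbon (skew mu (pinter lam mu))"
  shows "card (B0 lam - B0 mu) = 2"
proof -
  define nu where "nu = pinter lam mu"
  have nu: "is_partition nu" using pinter_part[OF lam mu] nu_def by simp
  have cn: "cnt nu t = min (cnt lam t) (cnt mu t)" for t using cnt_pinter[OF lam mu] nu_def by simp
  obtain p a where pa: "p < a" and D1: "\<forall>t. cnt lam t = cnt nu t + (if p < t \<and> t \<le> a then 1 else 0)"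
    using ribbon_only_if[OF nu lam _ r1[folded nu_def]] cn by auto
  obtain q b where qb: "q < b" and D2: "\<forall>t. cnt mu t = cnt nu t + (if q < t \<and> t \<le> b then 1 else 0)"
    using ribbon_only_if[OF nu mu _ r2[folded nu_def]] cn by auto
  have disj: "\<not> (p < t \<and> t \<le> a \<and> q < t \<and> t \<le> b)" for t
  proof
    assume "p < t \<and> t \<le> a \<and> q < t \<and> t \<le> b"
    then have "cnt nu t < cnt lam t" "cnt nu t < cnt mu t" using D1 D2 by auto
    then show False using cn[of t] by simp
  qed
  have pq: "p \<noteq> q" using disj[of "p+1"] pa qb by auto
  have abn: "a \<noteq> b" using disj[of a] pa qb by auto
  have e1: "B0 lam - B0 nu = {a}" "B0 nu - B0 lam = {p}" using R1[OF nu lam _ pa] D1 by auto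
  have e2: "B0 mu - B0 nu = {b}" "B0 nu - B0 mu = {q}" using R1[OF nu mu _ qb] D2 by auto
  have aq: "a \<noteq> q" using e1 e2 by blast
  have m1: "x \<in> B0 lam \<and> x \<notin> B0 nu \<longleftrightarrow> x = a" for x using e1(1) by blast
  have m2: "x \<in> B0 nu \<and> x \<notin> B0 lam \<longleftrightarrow> x = p" for x using e1(2) by blast
  have m3: "x \<in> B0 mu \<and> x \<notin> B0 nu \<longleftrightarrow> x = b" for x using e2(1) by blast
  have m4: "x \<in> B0 nu \<and> x \<notin> B0 mu \<longleftrightarrow> x = q" for x using e2(2) by blast
  have "x \<in> B0 lam - B0 mu \<longleftrightarrow> x = a \<or> x = q" for x
    using m1[of x] m2[of x] m3[of x] m4[of x] pq abn by auto
  then have "B0 lam - B0 mu = {a, q}" by blast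
  then show ?thesis using aq by simp
qed


lemma divmod_unique:
  fixes r r' x x' n :: int
  assumes "0 \<le> r" "r < n" "0 \<le> r'" "r' < n" "r + n * x = r' + n * x'"
  shows "r = r' \<and> x = x'"
proof -
  have "(r + n * x) mod n = r" using assms(1,2) by simp
  moreover have "(r' + n * x') mod n = r'" using assms(3,4) by simp
  ultimately have rr: "r = r'" using assms(5) by simp
  then have "n * x = n * x'" using assms(5) by simp
  then have "x = x'" using assms(2,1) by simp
  then show ?thesis using rr by simp
qed

lemma C2:
  fixes k k' :: int
  assumes n: "n \<ge> 1" and l: "l \<ge> 1" and ph: "phi n l k = phi n l k'" and dd: "ddec n l k = ddec n l k'"
  shows "k = k'"
proof -
  define u where "u = k - 1"
  define u' where "u' = k' - 1"
  have e1: "(k - 1) div (int n * int l) = (u div int n) div int l" unfolding u_def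
    by (simp add: zdiv_zmult2_eq)
  have e2: "(k' - 1) div (int n * int l) = (u' div int n) div int l" unfolding u'_def
    by (simp add: zdiv_zmult2_eq)
  have "u mod int n + int n * ((u div int n) div int l) = u' mod int n + int n * ((u' div int n) div int l)"
    using ph e1 e2 unfolding phi_def cdec_def mdec_def u_def u'_def by simp
  then have A: "u mod int n = u' mod int n \<and> (u div int n) div int l = (u' div int n) div int l"
    using n by (intro divmod_unique) auto
  have "nat ((u div int n) mod int l) = nat ((u' div int n) mod int l)"
    using dd unfolding ddec_def u_def u'_def by simp
  moreover have "0 \<le> (u div int n) mod int l" "0 \<le> (u' div int n) mod int l" using l by simp_all
  ultimately have B: "(u div int n) mod int l = (u' div int n) mod int l" by simp
  have "u div int n = u' div int n"
    by (metis A B mult_div_mod_eq)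
  then have "u = u'" using A by (metis mult_div_mod_eq)
  then show ?thesis unfolding u_def u'_def by simp
qed

lemma C3: assumes "l \<ge> 1" shows "ddec n l k \<in> {1..l}"
proof -
  have "0 \<le> ((k - 1) div int n) mod int l" "((k - 1) div int n) mod int l < int l" using assms by auto
  then show ?thesis unfolding ddec_def by auto
qed

lemma beta_shift: "beta_set lam s = (\<lambda>x. x + s + 1) ` B0 lam"
  unfolding beta_set_def B0_def by (auto simp: image_iff)

lemma Bset_shift: "Bset lam s r = (\<lambda>x. x + s + 1) ` T0 lam r"
  unfolding Bset_def T0_def by (auto simp: image_iff)

lemma shift_inj: "inj (\<lambda>x::int. x + s + 1)"
  by (rule injI) simp

lemma card_beta_diff:
  "card (beta_set A s - beta_set B s) = card (B0 A - B0 B)"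
  "finite (B0 A - B0 B) \<Longrightarrow> finite (beta_set A s - beta_set B s)"
  unfolding beta_shift image_set_diff[OF shift_inj, symmetric]
  by (simp_all add: card_image inj_on_subset[OF shift_inj])

lemma corr_lhs:
  "(y, b) \<in> {(int (L b i) + sl b + 1 - int i, b) | i b. i \<ge> 1 \<and> b \<in> {1..l}}
   \<longleftrightarrow> b \<in> {1..l} \<and> y \<in> beta_set (L b) (sl b)"
  unfolding beta_set_def by auto

lemma memX:
  assumes n: "n \<ge> 1" and l: "l \<ge> 1" and c: "corresp n l sl L lam"
  shows "k \<in> beta_set lam (\<Sum>b=1..l. sl b) \<longleftrightarrow> phi n l k \<in> beta_set (L (ddec n l k)) (sl (ddec n l k))"
proof -
  let ?X = "beta_set lam (\<Sum>b=1..l. sl b)"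
  have eq: "(phi n l k, ddec n l k) \<in> {(int (L b i) + sl b + 1 - int i, b) | i b. i \<ge> 1 \<and> b \<in> {1..l}}
        \<longleftrightarrow> (\<exists>k'. k' \<in> ?X \<and> phi n l k' = phi n l k \<and> ddec n l k' = ddec n l k)"
  proof -
    have eqset: "{(int (L b i) + sl b + 1 - int i, b) | i b. i \<ge> 1 \<and> b \<in> {1..l}} =
       {(phi n l k, ddec n l k) | k. k \<in> ?X}"
      using c unfolding corresp_def .
    have "(phi n l k, ddec n l k) \<in> {(phi n l k, ddec n l k) | k. k \<in> ?X}
       \<longleftrightarrow> (\<exists>k'. k' \<in> ?X \<and> phi n l k' = phi n l k \<and> ddec n l k' = ddec n l k)"
      by (simp only: mem_Collect_eq Pair_inject prod.inject) (metis)
    then show ?thesis unfolding eqset .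
  qed
  have e2: "(\<exists>k'. k' \<in> ?X \<and> phi n l k' = phi n l k \<and> ddec n l k' = ddec n l k) \<longleftrightarrow> k \<in> ?X"
    using C2[OF n l] by blast
  have e3: "(phi n l k, ddec n l k) \<in> {(int (L b i) + sl b + 1 - int i, b) | i b. i \<ge> 1 \<and> b \<in> {1..l}}
     \<longleftrightarrow> phi n l k \<in> beta_set (L (ddec n l k)) (sl (ddec n l k))"
    using corr_lhs[of "phi n l k" "ddec n l k" L sl l] C3[OF l] by blast
  show ?thesis using eq e2 e3 by blast
qed

lemma surjX:
  assumes c: "corresp n l sl L lam" and b: "b \<in> {1..l}" and y: "y \<in> beta_set (L b) (sl b)"
  shows "\<exists>k \<in> beta_set lam (\<Sum>b=1..l. sl b). phi n l k = y \<and> ddec n l k = b"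
proof -
  have eqset: "{(int (L b i) + sl b + 1 - int i, b) | i b. i \<ge> 1 \<and> b \<in> {1..l}} =
     {(phi n l k, ddec n l k) | k. k \<in> beta_set lam (\<Sum>b=1..l. sl b)}"
    using c unfolding corresp_def .
  have h: "(y, b) \<in> {(int (L b i) + sl b + 1 - int i, b) | i b. i \<ge> 1 \<and> b \<in> {1..l}}"
    using corr_lhs b y by blast
  have "(y, b) \<in> {(phi n l k, ddec n l k) | k. k \<in> beta_set lam (\<Sum>b=1..l. sl b)}"
    using h unfolding eqset .
  then obtain k where "(y, b) = (phi n l k, ddec n l k)" "k \<in> beta_set lam (\<Sum>b=1..l. sl b)"
    by blast
  then show ?thesis by auto
qed


lemma card_split:
  assumes n: "n \<ge> 1" and l: "l \<ge> 1"
    and cL: "corresp n l sl L lam" and cM: "corresp n l sl M mu"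
    and fin: "\<And>b. b \<in> {1..l} \<Longrightarrow> finite (beta_set (L b) (sl b) - beta_set (M b) (sl b))"
  shows "card (beta_set lam (\<Sum>b=1..l. sl b) - beta_set mu (\<Sum>b=1..l. sl b))
         = (\<Sum>b=1..l. card (beta_set (L b) (sl b) - beta_set (M b) (sl b)))"
proof -
  let ?X = "beta_set lam (\<Sum>b=1..l. sl b)"
  let ?Y = "beta_set mu (\<Sum>b=1..l. sl b)"
  define F where "F = (\<lambda>k. (phi n l k, ddec n l k))"
  define P where "P = {(y, b). b \<in> {1..l} \<and> y \<in> beta_set (L b) (sl b) - beta_set (M b) (sl b)}"
  have injF: "inj F" unfolding F_def by (rule injI) (use C2[OF n l] in auto)
  have img: "F ` (?X - ?Y) = P"
  proof
    show "F ` (?X - ?Y) \<subseteq> P"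
    proof
      fix z assume "z \<in> F ` (?X - ?Y)"
      then obtain k where k: "k \<in> ?X" "k \<notin> ?Y" "z = F k" by blast
      then show "z \<in> P" unfolding P_def F_def using memX[OF n l cL, of k] memX[OF n l cM, of k] C3[OF l]
        by auto
    qed
    show "P \<subseteq> F ` (?X - ?Y)"
    proof
      fix z assume "z \<in> P"
      then obtain y b where z: "z = (y, b)" "b \<in> {1..l}" "y \<in> beta_set (L b) (sl b)" "y \<notin> beta_set (M b) (sl b)"
        unfolding P_def by blast
      obtain k where k: "k \<in> ?X" "phi n l k = y" "ddec n l k = b" using surjX[OF cL z(2,3)] by blast
      have "k \<notin> ?Y" using memX[OF n l cM, of k] k z by simp
      then show "z \<in> F ` (?X - ?Y)" using k z unfolding F_def by force
    qed
  qed
  have c1: "card (?X - ?Y) = card P" using img card_image[OF inj_on_subset[OF injF]] by fastforce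
  have P2: "P = (\<lambda>(b, y). (y, b)) ` (SIGMA b:{1..l}. beta_set (L b) (sl b) - beta_set (M b) (sl b))"
    unfolding P_def by auto
  have injs: "inj (\<lambda>(b::nat, y::int). (y, b))" by (rule injI) auto
  have "card P = card (SIGMA b:{1..l}. beta_set (L b) (sl b) - beta_set (M b) (sl b))"
    unfolding P2 by (rule card_image[OF inj_on_subset[OF injs]]) simp
  also have "\<dots> = (\<Sum>b=1..l. card (beta_set (L b) (sl b) - beta_set (M b) (sl b)))"
    using fin by (intro card_SigmaI) auto
  finally show ?thesis using c1 by simp
qed

lemma sum2:
  fixes f :: "'a \<Rightarrow> nat"
  assumes S: "finite S" and s: "(\<Sum>b\<in>S. f b) = 2"
  shows "(\<exists>d\<in>S. f d = 2 \<and> (\<forall>b\<in>S. b \<noteq> d \<longrightarrow> f b = 0)) \<or>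
         (\<exists>d\<in>S. \<exists>d'\<in>S. d \<noteq> d' \<and> f d = 1 \<and> f d' = 1 \<and> (\<forall>b\<in>S. b \<notin> {d, d'} \<longrightarrow> f b = 0))"
proof -
  obtain d where d: "d \<in> S" "f d \<noteq> 0" using s by (metis sum.neutral zero_neq_numeral)
  have sd: "f d + (\<Sum>b\<in>S - {d}. f b) = 2" using sum.remove[OF S d(1), of f] s by simp
  show ?thesis
  proof (cases "(\<Sum>b\<in>S - {d}. f b) = 0")
    case True
    then have "\<forall>b\<in>S. b \<noteq> d \<longrightarrow> f b = 0" using S by simp
    then show ?thesis using True sd d by auto
  next
    case False
    then have fd: "f d = 1" "(\<Sum>b\<in>S - {d}. f b) = 1" using sd d by auto
    obtain d' where d': "d' \<in> S - {d}" "f d' \<noteq> 0" using fd(2) by (metis sum.neutral zero_neq_one)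
    have fS: "finite (S - {d})" using S by simp
    have "f d' + (\<Sum>b\<in>S - {d} - {d'}. f b) = 1" using sum.remove[OF fS d'(1), of f] fd(2) by simp
    then have fd': "f d' = 1" "(\<Sum>b\<in>S - {d} - {d'}. f b) = 0" using d' by auto
    then have "\<forall>b\<in>S. b \<notin> {d, d'} \<longrightarrow> f b = 0" using S by simp
    then show ?thesis using fd fd' d d' by blast
  qed
qed

lemma sum_one:
  fixes f :: "'a \<Rightarrow> nat"
  assumes "finite S" "d \<in> S" "\<forall>b\<in>S. b \<noteq> d \<longrightarrow> f b = 0"
  shows "(\<Sum>b\<in>S. f b) = f d"
  using sum.remove[OF assms(1,2), of f] assms(3) by simp

lemma sum_two:
  fixes f :: "'a \<Rightarrow> nat"
  assumes "finite S" "d \<in> S" "d' \<in> S" "d \<noteq> d'" "\<forall>b\<in>S. b \<notin> {d, d'} \<longrightarrow> f b = 0"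
  shows "(\<Sum>b\<in>S. f b) = f d + f d'"
proof -
  have "(\<Sum>b\<in>S. f b) = f d + (\<Sum>b\<in>S - {d}. f b)" using sum.remove[OF assms(1,2)] by simp
  also have "(\<Sum>b\<in>S - {d}. f b) = f d' + (\<Sum>b\<in>S - {d} - {d'}. f b)"
    using sum.remove[OF _ _, of "S - {d}" d' f] assms by simp
  also have "(\<Sum>b\<in>S - {d} - {d'}. f b) = 0" using assms by simp
  finally show ?thesis by simp
qed

lemma sum_rest1:
  fixes f g :: "'a \<Rightarrow> nat"
  assumes "finite S" "d \<in> S" "\<forall>b\<in>S. b \<noteq> d \<longrightarrow> f b = g b" "(\<Sum>b\<in>S. f b) = (\<Sum>b\<in>S. g b)"
  shows "f d = g d"
proof -
  have "(\<Sum>b\<in>S - {d}. f b) = (\<Sum>b\<in>S - {d}. g b)" using assms(3) by (intro sum.cong) auto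
  then show ?thesis using sum.remove[OF assms(1,2), of f] sum.remove[OF assms(1,2), of g] assms(4) by simp
qed

lemma sum_rest2:
  fixes f g :: "'a \<Rightarrow> nat"
  assumes "finite S" "d \<in> S" "d' \<in> S" "d \<noteq> d'" "\<forall>b\<in>S. b \<notin> {d, d'} \<longrightarrow> f b = g b"
    "(\<Sum>b\<in>S. f b) = (\<Sum>b\<in>S. g b)"
  shows "f d + f d' = g d + g d'"
proof -
  have r: "(\<Sum>b\<in>S. h b) = h d + h d' + (\<Sum>b\<in>S - {d} - {d'}. h b)" for h :: "'a \<Rightarrow> nat"
  proof -
    have "(\<Sum>b\<in>S. h b) = h d + (\<Sum>b\<in>S - {d}. h b)" using sum.remove[OF assms(1,2)] by simp
    also have "(\<Sum>b\<in>S - {d}. h b) = h d' + (\<Sum>b\<in>S - {d} - {d'}. h b)"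
      using sum.remove[OF _ _, of "S - {d}" d' h] assms by simp
    finally show ?thesis by simp
  qed
  have "(\<Sum>b\<in>S - {d} - {d'}. f b) = (\<Sum>b\<in>S - {d} - {d'}. g b)" using assms(5) by (intro sum.cong) auto
  then show ?thesis using r[of f] r[of g] assms(6) by simp
qed


lemma J1I:
  assumes d: "d \<in> {1..l}" and d': "d' \<in> {1..l}" and dd: "d \<noteq> d'"
    and Ld: "is_partition (L d)" "is_partition (L d')" and Md: "is_partition (M d)" "is_partition (M d')"
    and s1: "psubset_eq (M d) (L d)" "is_ribbon (skew (L d) (M d))"
    and s2: "psubset_eq (L d') (M d')" "is_ribbon (skew (M d') (L d'))"
    and rest: "\<forall>b\<in>{1..l}. b \<notin> {d, d'} \<longrightarrow> L b = M b"
    and sz: "psize (L d) + psize (L d') = psize (M d) + psize (M d')"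
  shows "J1 l L M"
proof -
  have p1: "psize (M d) < psize (L d)" using ribbon_pos[OF Md(1) Ld(1) s1] .
  have p2: "psize (L d') < psize (M d')" using ribbon_pos[OF Ld(2) Md(2) s2] .
  have "card (skew (L d) (M d)) = card (skew (M d') (L d'))"
    using card_skew[OF Md(1) Ld(1) s1(1)] card_skew[OF Ld(2) Md(2) s2(1)] sz p1 p2 by simp
  moreover have "L d \<noteq> M d" using p1 by auto
  then have "\<not> mp_eq l L M" unfolding mp_eq_def using d by blast
  ultimately show ?thesis unfolding J1_def using d d' dd s1 s2 rest by blast
qed

theorem mainTheorem7:
  fixes n l m r :: nat and sl :: "nat \<Rightarrow> int"
    and L M :: "nat \<Rightarrow> nat \<Rightarrow> nat" and lam mu :: "nat \<Rightarrow> nat"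
  assumes "n \<ge> 1" and "l \<ge> 1" and "m \<ge> 1"
    and "L \<in> multipartitions l m" and "M \<in> multipartitions l m"
    and "is_partition lam" and "is_partition mu"
    and "corresp n l sl L lam" and "corresp n l sl M mu"
    and "psize lam = r" and "psize mu = r"
  shows "(J1 l L M \<or> J2 l L M) \<longleftrightarrow>
         int (card (Bset lam (\<Sum>b=1..l. sl b) r \<inter> Bset mu (\<Sum>b=1..l. sl b) r)) = int r - 2"
proof -
  note n = assms(1) and l = assms(2) and lam = assms(6) and mu = assms(7)
    and cL = assms(8) and cM = assms(9)
  define s where "s = (\<Sum>b=1..l. sl b)"
  have Lp: "is_partition (L b)" if "b \<in> {1..l}" for b using assms(4) that unfolding multipartitions_def by auto
  have Mp: "is_partition (M b)" if "b \<in> {1..l}" for b using assms(5) that unfolding multipartitions_def by auto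
  have psum: "(\<Sum>b=1..l. psize (L b)) = (\<Sum>b=1..l. psize (M b))"
    using assms(4,5) unfolding multipartitions_def by simp
  define \<delta> where "\<delta> b = card (B0 (L b) - B0 (M b))" for b
  have fin: "finite (B0 (L b) - B0 (M b))" if "b \<in> {1..l}" for b using balance(2)[OF Lp[OF that] Mp[OF that]] .
  have zero: "L b = M b" if b: "b \<in> {1..l}" and z: "\<delta> b = 0" for b
  proof -
    have e1: "B0 (L b) - B0 (M b) = {}" using z fin[OF b] unfolding \<delta>_def by simp
    have "card (B0 (M b) - B0 (L b)) = 0" using balance(1)[OF Lp[OF b] Mp[OF b]] z unfolding \<delta>_def by simp
    moreover have "finite (B0 (M b) - B0 (L b))" using balance(2)[OF Mp[OF b] Lp[OF b]] .
    ultimately have e2: "B0 (M b) - B0 (L b) = {}" by simp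
    have "B0 (L b) = B0 (M b)" using e1 e2 by blast
    then show ?thesis using B0_det[OF Lp[OF b] Mp[OF b]] by simp
  qed
  have vl: "\<forall>i>r. lam i = 0" using vanish[OF lam assms(10)] .
  have vm: "\<forall>i>r. mu i = 0" using vanish[OF mu assms(11)] .
  have ci: "card (T0 lam r \<inter> T0 mu r) + card (B0 lam - B0 mu) = r" using card_inter(1)[OF lam mu vl vm] .
  have "Bset lam s r \<inter> Bset mu s r = (\<lambda>x. x + s + 1) ` (T0 lam r \<inter> T0 mu r)"
    unfolding Bset_shift image_Int[OF shift_inj] ..
  then have cb: "card (Bset lam s r \<inter> Bset mu s r) = card (T0 lam r \<inter> T0 mu r)"
    by (simp add: card_image inj_on_subset[OF shift_inj])
  have split: "card (B0 lam - B0 mu) = (\<Sum>b=1..l. \<delta> b)"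
  proof -
    have "card (B0 lam - B0 mu) = card (beta_set lam s - beta_set mu s)" using card_beta_diff(1) by simp
    also have "\<dots> = (\<Sum>b=1..l. card (beta_set (L b) (sl b) - beta_set (M b) (sl b)))"
      unfolding s_def using card_split[OF n l cL cM] card_beta_diff(2) fin by blast
    also have "\<dots> = (\<Sum>b=1..l. \<delta> b)" unfolding \<delta>_def using card_beta_diff(1) by simp
    finally show ?thesis .
  qed
  have RHS: "int (card (Bset lam s r \<inter> Bset mu s r)) = int r - 2 \<longleftrightarrow> (\<Sum>b=1..l. \<delta> b) = 2"
    using ci cb split by linarith
  have LHS: "(J1 l L M \<or> J2 l L M) \<longleftrightarrow> (\<Sum>b=1..l. \<delta> b) = 2"
  proof
    assume "J1 l L M \<or> J2 l L M"
    then show "(\<Sum>b=1..l. \<delta> b) = 2"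
    proof
      assume "J1 l L M"
      then obtain d d' where d: "d \<in> {1..l}" "d' \<in> {1..l}" "d \<noteq> d'"
        and s1: "psubset_eq (M d) (L d)" and s2: "psubset_eq (L d') (M d')"
        and rest: "\<forall>b\<in>{1..l}. b \<notin> {d, d'} \<longrightarrow> L b = M b"
        and r1: "is_ribbon (skew (L d) (M d))" and r2: "is_ribbon (skew (M d') (L d'))"
        unfolding J1_def by blast
      have "\<delta> d = 1" unfolding \<delta>_def using S2(1)[OF Mp[OF d(1)] Lp[OF d(1)] s1 r1] .
      moreover have "\<delta> d' = 1" unfolding \<delta>_def using S2(2)[OF Lp[OF d(2)] Mp[OF d(2)] s2 r2] .
      moreover have "\<forall>b\<in>{1..l}. b \<notin> {d, d'} \<longrightarrow> \<delta> b = 0" using rest unfolding \<delta>_def by simp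
      ultimately show ?thesis using sum_two[of "{1..l}" d d' \<delta>] d by simp
    next
      assume "J2 l L M"
      then obtain d where d: "d \<in> {1..l}" and rest: "\<forall>b\<in>{1..l}. b \<noteq> d \<longrightarrow> L b = M b"
        and r1: "is_ribbon (skew (L d) (pinter (L d) (M d)))"
        and r2: "is_ribbon (skew (M d) (pinter (L d) (M d)))"
        unfolding J2_def by blast
      have "\<delta> d = 2" unfolding \<delta>_def using S4[OF Lp[OF d] Mp[OF d] r1 r2] .
      moreover have "\<forall>b\<in>{1..l}. b \<noteq> d \<longrightarrow> \<delta> b = 0" using rest unfolding \<delta>_def by simp
      ultimately show ?thesis using sum_one[of "{1..l}" d \<delta>] d by simp
    qed
  next
    assume "(\<Sum>b=1..l. \<delta> b) = 2"
    then have "(\<exists>d\<in>{1..l}. \<delta> d = 2 \<and> (\<forall>b\<in>{1..l}. b \<noteq> d \<longrightarrow> \<delta> b = 0)) \<or>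
         (\<exists>d\<in>{1..l}. \<exists>d'\<in>{1..l}. d \<noteq> d' \<and> \<delta> d = 1 \<and> \<delta> d' = 1 \<and> (\<forall>b\<in>{1..l}. b \<notin> {d, d'} \<longrightarrow> \<delta> b = 0))"
      by (intro sum2) auto
    then show "J1 l L M \<or> J2 l L M"
    proof
      assume "\<exists>d\<in>{1..l}. \<delta> d = 2 \<and> (\<forall>b\<in>{1..l}. b \<noteq> d \<longrightarrow> \<delta> b = 0)"
      then obtain d where d: "d \<in> {1..l}" "\<delta> d = 2" and z: "\<forall>b\<in>{1..l}. b \<noteq> d \<longrightarrow> \<delta> b = 0" by blast
      have rest: "\<forall>b\<in>{1..l}. b \<noteq> d \<longrightarrow> L b = M b" using z zero by blast
      have "psize (L d) = psize (M d)" using sum_rest1[of "{1..l}" d "\<lambda>b. psize (L b)" "\<lambda>b. psize (M b)"] d rest psum by simp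
      then have j: "is_ribbon (skew (L d) (pinter (L d) (M d))) \<and> is_ribbon (skew (M d) (pinter (L d) (M d)))
         \<and> card (skew (L d) (pinter (L d) (M d))) = card (skew (M d) (pinter (L d) (M d)))"
        using S3[OF Lp[OF d(1)] Mp[OF d(1)]] d(2) unfolding \<delta>_def by blast
      have "L d \<noteq> M d" using d(2) unfolding \<delta>_def by auto
      then have "\<not> mp_eq l L M" unfolding mp_eq_def using d(1) by blast
      then have "J2 l L M" unfolding J2_def using d(1) rest j by blast
      then show ?thesis by simp
    next
      assume "\<exists>d\<in>{1..l}. \<exists>d'\<in>{1..l}. d \<noteq> d' \<and> \<delta> d = 1 \<and> \<delta> d' = 1 \<and> (\<forall>b\<in>{1..l}. b \<notin> {d, d'} \<longrightarrow> \<delta> b = 0)"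
      then obtain d d' where d: "d \<in> {1..l}" "d' \<in> {1..l}" "d \<noteq> d'" "\<delta> d = 1" "\<delta> d' = 1"
        and z: "\<forall>b\<in>{1..l}. b \<notin> {d, d'} \<longrightarrow> \<delta> b = 0" by blast
      have rest: "\<forall>b\<in>{1..l}. b \<notin> {d, d'} \<longrightarrow> L b = M b" using z zero by blast
      have rest': "\<forall>b\<in>{1..l}. b \<notin> {d', d} \<longrightarrow> L b = M b" using rest by blast
      have sz: "psize (L d) + psize (L d') = psize (M d) + psize (M d')"
        using sum_rest2[of "{1..l}" d d' "\<lambda>b. psize (L b)" "\<lambda>b. psize (M b)"] d rest psum by simp
      have opt: "(psubset_eq (M b) (L b) \<and> is_ribbon (skew (L b) (M b))) \<or> (psubset_eq (L b) (M b) \<and> is_ribbon (skew (M b) (L b)))"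
        if b: "b \<in> {1..l}" "\<delta> b = 1" for b
      proof -
        obtain a where a: "B0 (L b) - B0 (M b) = {a}" using b(2) unfolding \<delta>_def by (metis card_1_singletonE)
        have "card (B0 (M b) - B0 (L b)) = 1" using balance(1)[OF Lp[OF b(1)] Mp[OF b(1)]] b(2) unfolding \<delta>_def by simp
        then obtain c where c: "B0 (M b) - B0 (L b) = {c}" by (metis card_1_singletonE)
        show ?thesis using S1[OF Lp[OF b(1)] Mp[OF b(1)] a c] .
      qed
      have Ld: "is_partition (L d)" "is_partition (L d')" using Lp d by auto
      have Md: "is_partition (M d)" "is_partition (M d')" using Mp d by auto
      show ?thesis
      proof (cases "psubset_eq (M d) (L d) \<and> is_ribbon (skew (L d) (M d))")
        case T1: True
        show ?thesis
        proof (cases "psubset_eq (L d') (M d') \<and> is_ribbon (skew (M d') (L d'))")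
          case True
          then show ?thesis using J1I[OF d(1,2,3) Ld Md _ _ _ _ rest sz] T1 by blast
        next
          case False
          then have o: "psubset_eq (M d') (L d') \<and> is_ribbon (skew (L d') (M d'))" using opt[OF d(2) d(5)] by blast
          have "psize (M d) < psize (L d)" using ribbon_pos[OF Md(1) Ld(1)] T1 by blast
          moreover have "psize (M d') < psize (L d')" using ribbon_pos[OF Md(2) Ld(2)] o by blast
          ultimately show ?thesis using sz by simp
        qed
      next
        case F1: False
        then have o1: "psubset_eq (L d) (M d) \<and> is_ribbon (skew (M d) (L d))" using opt[OF d(1) d(4)] by blast
        show ?thesis
        proof (cases "psubset_eq (M d') (L d') \<and> is_ribbon (skew (L d') (M d'))")
          case True
          have sz': "psize (L d') + psize (L d) = psize (M d') + psize (M d)" using sz by simp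
          show ?thesis using J1I[OF d(2,1) d(3)[symmetric] Ld(2,1) Md(2,1) _ _ _ _ rest' sz'] True o1 by blast
        next
          case False
          then have o: "psubset_eq (L d') (M d') \<and> is_ribbon (skew (M d') (L d'))" using opt[OF d(2) d(5)] by blast
          have "psize (L d) < psize (M d)" using ribbon_pos[OF Ld(1) Md(1)] o1 by blast
          moreover have "psize (L d') < psize (M d')" using ribbon_pos[OF Ld(2) Md(2)] o by blast
          ultimately show ?thesis using sz by simp
        qed
      qed
    qed
  qed
  show ?thesis using LHS RHS unfolding s_def by simp
qed


end
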